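(* Let $E_1,\dots,E_N$ be a symmetric sequence of events with correlation functions $G_k$. Then for every $k$ with $2\le k\le N$ and all $r_2,\dots,r_k\in\{0,1\}$, $$G_k(1,r_2,\dots,r_k)=-G_k(0,r_2,\dots,r_k).$$
   Context: $\mathbbm{1}_E$ is the indicator function of an event $E$. A finite sequence of events $E_1,\dots,E_N$ on a common probability space is called symmetric if for all $r_1,\dots,r_N\in\{0,1\}$ and all permutations $\sigma$ of $\{1,\dots,N\}$, $P(\mathbbm{1}_{E_1}=r_1,\dots,\mathbbm{1}_{E_N}=r_N)=P(\mathbbm{1}_{E_1}=r_{\sigma(1)},\dots,\mathbbm{1}_{E_N}=r_{\sigma(N)})$. For $1\le k\le N$ the probability function of order $k$ is $P_k(r_1,\dots,r_k):=\sum_{r_{k+1},\dots,r_N\in\{0,1\}}P(\mathbbm{1}_{E_1}=r_1,\dots,\mathbbm{1}_{E_N}=r_N)$. The correlation functions $G_k:\{0,1\}^k\to\mathbb{R}$ are defined by $G_1:=P_1$ and, recursively for $1<k\le N$, $$G_k(r_1,\dots,r_k):=P_k(r_1,\dots,r_k)-\sum_{\sigma}\sum_{l=1}^{k-1}\frac{1}{(l-1)!\,(k-l)!}G_l(r_1,r_{\sigma(2)},\dots,r_{\sigma(l)})\,P_{k-l}(r_{\sigma(l+1)},\dots,r_{\sigma(k)}),$$ where $\sigma$ runs over all permutations of $\{2,\dots,k\}$. *)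

theory Defs
  imports "HOL-Probability.Probability"
begin

text \<open>Events are indexed 0,...,N-1 (paper: 1,...,N). Value vectors (r_1,...,r_k) are
  lists of naturals with entries in {0,1}.\<close>

definition joint_prob :: "'a measure \<Rightarrow> (nat \<Rightarrow> 'a set) \<Rightarrow> nat list \<Rightarrow> real" where
  "joint_prob M E rs =
     measure M {\<omega> \<in> space M. \<forall>i<length rs. indicator (E i) \<omega> = real (rs ! i)}"

definition symmetric_events :: "'a measure \<Rightarrow> (nat \<Rightarrow> 'a set) \<Rightarrow> nat \<Rightarrow> bool" where
  "symmetric_events M E N \<longleftrightarrow>
     (\<forall>rs \<sigma>. length rs = N \<longrightarrow> set rs \<subseteq> {0,1} \<longrightarrow> \<sigma> permutes {..<N} \<longrightarrow>
        joint_prob M E rs = joint_prob M E (map (\<lambda>i. rs ! \<sigma> i) [0..<N]))"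

definition prob_fun :: "'a measure \<Rightarrow> (nat \<Rightarrow> 'a set) \<Rightarrow> nat \<Rightarrow> nat \<Rightarrow> nat list \<Rightarrow> real" where
  "prob_fun M E N k rs =
     (\<Sum>ts\<in>{ts. length ts = N - k \<and> set ts \<subseteq> {0,1}}. joint_prob M E (rs @ ts))"

text \<open>Correlation functions G_k (argument list of length k). Permutations of {2..k}
  become permutations of the 0-based positions {1..<k}.\<close>
function corr_fun :: "'a measure \<Rightarrow> (nat \<Rightarrow> 'a set) \<Rightarrow> nat \<Rightarrow> nat \<Rightarrow> nat list \<Rightarrow> real" where
  "corr_fun M E N k rs =
     (if k \<le> 1 then prob_fun M E N 1 rs
      else prob_fun M E N k rs -
        (\<Sum>\<sigma>\<in>{\<sigma>. \<sigma> permutes {1..<k}}. \<Sum>l\<in>{1..<k}.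
           (1 / (fact (l - 1) * fact (k - l))) *
           corr_fun M E N l (rs ! 0 # map (\<lambda>i. rs ! \<sigma> i) [1..<l]) *
           prob_fun M E N (k - l) (map (\<lambda>i. rs ! \<sigma> i) [l..<k])))"
  by pat_completeness auto
termination
  by (relation "Wellfounded.measure (\<lambda>(M, E, N, k, rs). k)") auto

end

theory Submission
  imports Defs
begin

lemma jp_sets:
  assumes "\<And>i. i < N \<Longrightarrow> E i \<in> sets M" "length xs \<le> N"
  shows "{\<omega> \<in> space M. \<forall>i<length xs. indicator (E i) \<omega> = real (xs ! i)} \<in> sets M"
proof -
  have "\<And>i. i < length xs \<Longrightarrow> E i \<in> sets M" using assms by auto
  then show ?thesis by measurable
qed

lemma jp_snoc:
  assumes P: "prob_space M" and "\<And>i. i < N \<Longrightarrow> E i \<in> sets M" "length xs < N"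
  shows "joint_prob M E (xs @ [0]) + joint_prob M E (xs @ [1]) = joint_prob M E xs"
proof -
  interpret prob_space M by fact
  let ?n = "length xs"
  define A where "A = {\<omega> \<in> space M. \<forall>i<length xs. indicator (E i) \<omega> = real (xs ! i)}"
  have A: "A \<in> sets M" unfolding A_def using jp_sets[of N E M xs] assms by auto
  have En: "E ?n \<in> sets M" using assms by auto
  have e0: "{\<omega> \<in> space M. \<forall>i<length (xs@[0]). indicator (E i) \<omega> = real ((xs@[0]) ! i)} = A - E ?n"
    unfolding A_def by (auto simp: nth_append less_Suc_eq indicator_def split: if_splits)
  have e1: "{\<omega> \<in> space M. \<forall>i<length (xs@[1]). indicator (E i) \<omega> = real ((xs@[1]) ! i)} = A \<inter> E ?n"
    unfolding A_def by (auto simp: nth_append less_Suc_eq indicator_def split: if_splits)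
  have "measure M (A - E ?n) + measure M (A \<inter> E ?n) = measure M A"
  proof -
    have "A = (A - E ?n) \<union> (A \<inter> E ?n)" by blast
    then have "measure M A = measure M ((A - E ?n) \<union> (A \<inter> E ?n))" by simp
    also have "\<dots> = measure M (A - E ?n) + measure M (A \<inter> E ?n)"
      by (rule finite_measure_Union) (use A En in auto)
    finally show ?thesis by simp
  qed
  then show ?thesis unfolding joint_prob_def e0 e1 A_def by simp
qed

lemma lists_Suc:
  "{ts. length ts = Suc n \<and> set ts \<subseteq> A} = (\<lambda>(t,ts). t # ts) ` (A \<times> {ts. length ts = n \<and> set ts \<subseteq> A})"
  by (auto simp: length_Suc_conv image_iff)

lemma finite_lists01: "finite {ts::nat list. length ts = n \<and> set ts \<subseteq> {0,1}}"
  using finite_lists_length_eq[of "{0::nat,1}" n] by (simp add: conj_commute)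

lemma jp_sum_tail:
  assumes P: "prob_space M" and "\<And>i. i < N \<Longrightarrow> E i \<in> sets M" "length xs + n \<le> N"
  shows "(\<Sum>ts\<in>{ts. length ts = n \<and> set ts \<subseteq> {0,1}}. joint_prob M E (xs @ ts)) = joint_prob M E xs"
  using assms(3)
proof (induction n arbitrary: xs)
  case 0
  have "{ts::nat list. length ts = 0 \<and> set ts \<subseteq> {0,1}} = {[]}" by auto
  then show ?case by simp
next
  case (Suc n)
  have "(\<Sum>ts\<in>{ts. length ts = Suc n \<and> set ts \<subseteq> {0,1}}. joint_prob M E (xs @ ts))
      = (\<Sum>p\<in>{0,1} \<times> {ts. length ts = n \<and> set ts \<subseteq> {0::nat,1}}. (case p of (t, ts) \<Rightarrow> joint_prob M E (xs @ (t # ts))))"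
    unfolding lists_Suc by (subst sum.reindex) (auto simp: inj_on_def intro!: sum.cong split: prod.splits)
  also have "\<dots> = (\<Sum>t\<in>{0::nat,1}. \<Sum>ts\<in>{ts. length ts = n \<and> set ts \<subseteq> {0::nat,1}}. joint_prob M E ((xs @ [t]) @ ts))"
    by (subst sum.cartesian_product) simp
  also have "\<dots> = (\<Sum>t\<in>{0::nat,1}. joint_prob M E (xs @ [t]))"
    using Suc by (intro sum.cong refl Suc.IH) auto
  also have "\<dots> = joint_prob M E xs"
    using jp_snoc[OF P assms(2), where xs=xs] Suc.prems by simp
  finally show ?case .
qed

lemma prob_fun_jp:
  assumes P: "prob_space M" and "\<And>i. i < N \<Longrightarrow> E i \<in> sets M" "length xs = k" "k \<le> N"
  shows "prob_fun M E N k xs = joint_prob M E xs"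
  unfolding prob_fun_def using jp_sum_tail[OF P assms(2), where xs=xs and n="N - k"] assms by simp

lemma jp_nil: "prob_space M \<Longrightarrow> joint_prob M E [] = 1"
  unfolding joint_prob_def by (simp add: prob_space.prob_space)


lemma jp_perm:
  assumes S: "symmetric_events M E N" and "length xs = N" "set xs \<subseteq> {0,1}" "mset ys = mset xs"
  shows "joint_prob M E ys = joint_prob M E xs"
proof -
  obtain p where p: "p permutes {..<length xs}" "permute_list p xs = ys"
    using mset_eq_permutation[OF assms(4)] by blast
  have "joint_prob M E xs = joint_prob M E (map (\<lambda>i. xs ! p i) [0..<N])"
    using S assms(2,3) p(1) unfolding symmetric_events_def by auto
  also have "map (\<lambda>i. xs ! p i) [0..<N] = ys" using p(2) assms(2) by (simp add: permute_list_def)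
  finally show ?thesis by simp
qed

lemma jp_perm_short:
  assumes P: "prob_space M" and ev: "\<And>i. i < N \<Longrightarrow> E i \<in> sets M" and S: "symmetric_events M E N"
    and "length xs \<le> N" "set xs \<subseteq> {0,1}" "mset ys = mset xs"
  shows "joint_prob M E ys = joint_prob M E xs"
proof -
  have ly: "length ys = length xs" using assms(6) by (metis size_mset)
  have "joint_prob M E ys = prob_fun M E N (length xs) ys"
    using prob_fun_jp[OF P ev, where xs=ys and k="length xs"] ly assms by simp
  also have "\<dots> = prob_fun M E N (length xs) xs"
    unfolding prob_fun_def
    by (intro sum.cong refl jp_perm[OF S]) (use assms in auto)
  also have "\<dots> = joint_prob M E xs"
    using prob_fun_jp[OF P ev, where xs=xs and k="length xs"] assms by simp
  finally show ?thesis .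
qed

lemma corr_unfold:
  assumes "2 \<le> k" "length rs = k - 1"
  shows "corr_fun M E N k (r # rs) = prob_fun M E N k (r # rs) -
     (\<Sum>\<sigma>\<in>{\<sigma>. \<sigma> permutes {1..<k}}. \<Sum>l\<in>{1..<k}.
           (1 / (fact (l - 1) * fact (k - l))) *
           corr_fun M E N l (r # map (\<lambda>i. rs ! (\<sigma> i - 1)) [1..<l]) *
           prob_fun M E N (k - l) (map (\<lambda>i. rs ! (\<sigma> i - 1)) [l..<k]))" (is "_ = ?R")
proof -
  have key: "(r # rs) ! \<sigma> i = rs ! (\<sigma> i - 1)" if "\<sigma> permutes {1..<k}" "i \<in> {1..<k}" for \<sigma> i
  proof -
    have "\<sigma> i \<in> {1..<k}" using permutes_in_image[OF that(1)] that(2) by simp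
    then show ?thesis by (simp add: nth_Cons')
  qed
  have m: "map (\<lambda>i. (r # rs) ! \<sigma> i) [a..<b] = map (\<lambda>i. rs ! (\<sigma> i - 1)) [a..<b]"
    if "\<sigma> permutes {1..<k}" "1 \<le> a" "b \<le> k" for \<sigma> a b
    using key[OF that(1)] that(2,3) by (intro map_cong refl) auto
  have "corr_fun M E N k (r # rs) = prob_fun M E N k (r # rs) -
     (\<Sum>\<sigma>\<in>{\<sigma>. \<sigma> permutes {1..<k}}. \<Sum>l\<in>{1..<k}.
           (1 / (fact (l - 1) * fact (k - l))) *
           corr_fun M E N l ((r # rs) ! 0 # map (\<lambda>i. (r # rs) ! \<sigma> i) [1..<l]) *
           prob_fun M E N (k - l) (map (\<lambda>i. (r # rs) ! \<sigma> i) [l..<k]))"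
    by (subst corr_fun.simps) (use assms(1) in \<open>simp del: corr_fun.simps\<close>)
  also have "\<dots> = ?R"
    by (intro arg_cong2[where f="(-)"] refl sum.cong) (auto simp del: corr_fun.simps simp add: m)
  finally show ?thesis .
qed

declare corr_fun.simps[simp del]

lemma mset_B:
  assumes "\<sigma> permutes {1..<k}" "length rs = k - 1"
  shows "mset (map (\<lambda>i. rs ! (\<sigma> i - 1)) [1..<k]) = mset rs"
proof -
  have "map (\<lambda>i. rs ! (\<sigma> i - 1)) [1..<k] = map ((!) rs) (map (\<lambda>i. \<sigma> i - 1) [1..<k])" by simp
  moreover have "mset (map (\<lambda>i. \<sigma> i - 1) [1..<k]) = mset [0..<k-1]"
  proof -
    have im: "\<sigma> ` {1..<k} = {1..<k}" using permutes_image[OF assms(1)] .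
    have inj: "inj_on \<sigma> {1..<k}" using permutes_inj_on[OF assms(1)] .
    have "inj_on (\<lambda>i. \<sigma> i - 1) {1..<k}"
    proof (rule inj_onI)
      fix x y assume "x \<in> {1..<k}" "y \<in> {1..<k}" "\<sigma> x - 1 = \<sigma> y - 1"
      moreover then have "\<sigma> x \<in> {1..<k}" "\<sigma> y \<in> {1..<k}" using im by auto
      ultimately have "\<sigma> x = \<sigma> y" by auto
      then show "x = y" using inj \<open>x \<in> _\<close> \<open>y \<in> _\<close> by (auto dest: inj_onD)
    qed
    then have d: "distinct (map (\<lambda>i. \<sigma> i - 1) [1..<k])"
      by (simp add: distinct_map)
    have "(\<lambda>i. \<sigma> i - 1) ` {1..<k} = (\<lambda>i. i - 1) ` (\<sigma> ` {1..<k})" by auto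
    also have "\<dots> = {0..<k-1}" unfolding im
      by (auto simp: image_iff intro!: bexI[where x="Suc _"])
    finally have "set (map (\<lambda>i. \<sigma> i - 1) [1..<k]) = set [0..<k-1]" by simp
    then show ?thesis by (rule iffD1[OF set_eq_iff_mset_eq_distinct[OF d distinct_upt]])
  qed
  moreover have "rs = map ((!) rs) [0..<k-1]" using assms(2) map_nth[of rs] by simp
  ultimately show ?thesis by (metis mset_map)
qed

lemma main_sum:
  assumes P: "prob_space M" and ev: "\<And>i. i < N \<Longrightarrow> E i \<in> sets M" and S: "symmetric_events M E N"
  shows "2 \<le> k \<Longrightarrow> k \<le> N \<Longrightarrow> length rs = k - 1 \<Longrightarrow> set rs \<subseteq> {0,1} \<Longrightarrow>
    corr_fun M E N k (1 # rs) + corr_fun M E N k (0 # rs) = 0"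
proof (induction k arbitrary: rs rule: less_induct)
  case (less k)
  define Q where "Q = {\<sigma>. \<sigma> permutes {1..<k}}"
  define A where "A \<sigma> l = map (\<lambda>i. rs ! (\<sigma> i - 1)) [1..<l]" for \<sigma> l
  define B where "B \<sigma> l = map (\<lambda>i. rs ! (\<sigma> i - 1)) [l..<k]" for \<sigma> l
  define c where "c l = 1 / (fact (l - 1) * fact (k - l) :: real)" for l
  define T where "T r \<sigma> l = c l * corr_fun M E N l (r # A \<sigma> l) * prob_fun M E N (k - l) (B \<sigma> l)" for r \<sigma> l
  have u: "corr_fun M E N k (r # rs) = prob_fun M E N k (r # rs) - (\<Sum>\<sigma>\<in>Q. \<Sum>l\<in>{1..<k}. T r \<sigma> l)" for r
    unfolding T_def c_def A_def B_def Q_def using corr_unfold[OF less.prems(1,3)] by simp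
  have vals: "rs ! (\<sigma> i - 1) \<in> {0,1}" if "\<sigma> \<in> Q" "i \<in> {1..<k}" for \<sigma> i
  proof -
    have "\<sigma> i \<in> {1..<k}" using permutes_in_image[of \<sigma> "{1..<k}"] that unfolding Q_def by auto
    then have "rs ! (\<sigma> i - 1) \<in> set rs" using less.prems(3) by auto
    then show ?thesis using less.prems(4) by auto
  qed
  have jp1: "joint_prob M E [0] + joint_prob M E [1] = 1"
    using jp_snoc[OF P ev, where xs="[]"] less.prems jp_nil[OF P] by simp
  have c1: "corr_fun M E N 1 [r] = joint_prob M E [r]" for r
    using prob_fun_jp[OF P ev, where xs="[r]" and k=1] less.prems by (simp add: corr_fun.simps)
  have inner: "(\<Sum>l\<in>{1..<k}. T 1 \<sigma> l + T 0 \<sigma> l) = joint_prob M E rs / fact (k - 1)" if "\<sigma> \<in> Q" for \<sigma>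
  proof -
    have "(\<Sum>l\<in>{1..<k}. T 1 \<sigma> l + T 0 \<sigma> l) = (T 1 \<sigma> 1 + T 0 \<sigma> 1) + (\<Sum>l\<in>{Suc 1..<k}. T 1 \<sigma> l + T 0 \<sigma> l)"
      using less.prems(1) by (subst sum.atLeast_Suc_lessThan) auto
    also have "(\<Sum>l\<in>{Suc 1..<k}. T 1 \<sigma> l + T 0 \<sigma> l) = 0"
    proof (rule sum.neutral, rule ballI)
      fix l assume l: "l \<in> {Suc 1..<k}"
      have "\<forall>i\<in>{1..<l}. rs ! (\<sigma> i - 1) \<in> {0,1}" using vals[OF that] l by simp
      then have "set (A \<sigma> l) \<subseteq> {0,1}" unfolding A_def set_map image_subset_iff by simp
      then have "corr_fun M E N l (1 # A \<sigma> l) + corr_fun M E N l (0 # A \<sigma> l) = 0"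
        using less.IH[of l "A \<sigma> l"] l less.prems by (auto simp: A_def)
      moreover have "T 1 \<sigma> l + T 0 \<sigma> l = c l * (corr_fun M E N l (1 # A \<sigma> l) + corr_fun M E N l (0 # A \<sigma> l)) * prob_fun M E N (k - l) (B \<sigma> l)"
        unfolding T_def by (simp only: algebra_simps)
      ultimately show "T 1 \<sigma> l + T 0 \<sigma> l = 0" by simp
    qed
    also have "T 1 \<sigma> 1 + T 0 \<sigma> 1 = c 1 * (corr_fun M E N 1 [1] + corr_fun M E N 1 [0]) * prob_fun M E N (k - 1) (B \<sigma> 1)"
      unfolding T_def A_def by (simp add: distrib_left distrib_right)
    also have "corr_fun M E N 1 [1] + corr_fun M E N 1 [0] = 1"
      using jp1 c1[of 0] c1[of 1] by simp
    also have "prob_fun M E N (k - 1) (B \<sigma> 1) = joint_prob M E (B \<sigma> 1)"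
      using prob_fun_jp[OF P ev, where xs="B \<sigma> 1" and k="k-1"] less.prems by (simp add: B_def)
    also have "\<dots> = joint_prob M E rs"
      using jp_perm_short[OF P ev S, where xs=rs and ys="B \<sigma> 1"] mset_B[of \<sigma> k rs] that less.prems
      unfolding B_def Q_def by simp
    finally show ?thesis by (simp add: c_def)
  qed
  have cardQ: "card Q = fact (k - 1)" unfolding Q_def by (rule card_permutations) auto
  have sumQ: "(\<Sum>\<sigma>\<in>Q. \<Sum>l\<in>{1..<k}. T 1 \<sigma> l) + (\<Sum>\<sigma>\<in>Q. \<Sum>l\<in>{1..<k}. T 0 \<sigma> l) = joint_prob M E rs"
  proof -
    have "(\<Sum>\<sigma>\<in>Q. \<Sum>l\<in>{1..<k}. T 1 \<sigma> l) + (\<Sum>\<sigma>\<in>Q. \<Sum>l\<in>{1..<k}. T 0 \<sigma> l)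
       = (\<Sum>\<sigma>\<in>Q. \<Sum>l\<in>{1..<k}. T 1 \<sigma> l + T 0 \<sigma> l)" by (simp add: sum.distrib)
    also have "\<dots> = (\<Sum>\<sigma>\<in>Q. joint_prob M E rs / fact (k - 1))" using inner by simp
    also have "\<dots> = joint_prob M E rs" using cardQ by simp
    finally show ?thesis .
  qed
  have pf: "prob_fun M E N k (1 # rs) + prob_fun M E N k (0 # rs) = joint_prob M E rs"
  proof -
    have "prob_fun M E N k (r # rs) = joint_prob M E (rs @ [r])" if "r \<in> {0,1}" for r
    proof -
      have "prob_fun M E N k (r # rs) = joint_prob M E (r # rs)"
        using prob_fun_jp[OF P ev, where xs="r # rs" and k=k] less.prems by simp
      also have "\<dots> = joint_prob M E (rs @ [r])"
        using jp_perm_short[OF P ev S, where xs="rs @ [r]" and ys="r # rs"] less.prems that by auto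
      finally show ?thesis .
    qed
    moreover have "joint_prob M E (rs @ [0]) + joint_prob M E (rs @ [1]) = joint_prob M E rs"
    proof -
      have "length rs < N" using less.prems(1,2,3) by linarith
      then show ?thesis using jp_snoc[where M=M and N=N and E=E and xs=rs] P ev by blast
    qed
    ultimately show ?thesis by (simp add: add.commute)
  qed
  show ?case using u[of 1] u[of 0] sumQ pf by simp
qed

theorem mainTheorem4:
  fixes M :: "'a measure" and E :: "nat \<Rightarrow> 'a set" and N k :: nat and rs :: "nat list"
  assumes "prob_space M"
    and "\<And>i. i < N \<Longrightarrow> E i \<in> sets M"
    and "symmetric_events M E N"
    and "2 \<le> k" and "k \<le> N"
    and "length rs = k - 1" and "set rs \<subseteq> {0,1}"
  shows "corr_fun M E N k (1 # rs) = - corr_fun M E N k (0 # rs)"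
  using main_sum[OF assms(1-3), of k rs] assms(4-7) by linarith

end
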